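(* For $n\geq 1$, the polynomials $\widehat{A}_n(t,q)$ satisfy $$2\widehat{A}_{n+1}(t,q)=(1+tq)\widehat{A}_n(tq,q)+(1+tq^n)\widehat{A}_n(t,q)+\sum_{i=1}^{n-1}(1+t^2q^{2i+1})\binom{n}{i}\widehat{A}_i(t,q)\widehat{A}_{n-i}(tq^{i+1},q),$$ with $\widehat{A}_1(t,q)=1$.
   Context: For $\pi=\pi_1\cdots\pi_n\in\mathfrak{S}_n$ (permutations of $\{1,\dots,n\}$), $\widehat{D}(\pi)=\{2i:\pi_{2i}<\pi_{2i+1}\}\cup\{2i+1:\pi_{2i+1}>\pi_{2i+2}\}$ (indices in $\{1,\dots,n-1\}$), ${\rm altdes}(\pi)=|\widehat{D}(\pi)|$, ${\rm altmaj}(\pi)=\sum_{i\in\widehat{D}(\pi)}i$, and $\widehat{A}_n(t,q)=\sum_{\pi\in\mathfrak{S}_n}t^{{\rm altdes}(\pi)}q^{{\rm altmaj}(\pi)}$. *)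

theory Defs
  imports "HOL-Combinatorics.Multiset_Permutations"
begin

text \<open>A permutation pi = pi_1 ... pi_n of {1..n} is a list xs with xs ! (i-1) = pi_i.\<close>
definition altD :: "nat list \<Rightarrow> nat set" where
  "altD xs = {i \<in> {1..<length xs}.
      (even i \<and> xs ! (i - 1) < xs ! i) \<or> (odd i \<and> xs ! (i - 1) > xs ! i)}"

definition altdes :: "nat list \<Rightarrow> nat" where
  "altdes xs = card (altD xs)"

definition altmaj :: "nat list \<Rightarrow> nat" where
  "altmaj xs = \<Sum> (altD xs)"

text \<open>The bivariate polynomial Ahat_n(t,q), represented by its evaluation at arbitrary
  elements t, q of an arbitrary commutative ring.\<close>
definition Ahat :: "nat \<Rightarrow> 'a::comm_ring_1 \<Rightarrow> 'a \<Rightarrow> 'a" where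
  "Ahat n t q = (\<Sum>xs\<in>permutations_of_set {1..n}. t ^ altdes xs * q ^ altmaj xs)"

end

theory Submission
  imports Defs
begin

definition stp :: "'a::comm_ring_1 \<Rightarrow> 'a \<Rightarrow> nat \<Rightarrow> nat \<Rightarrow> nat \<Rightarrow> 'a" where
  "stp t q k x y = (if (even k \<and> x < y) \<or> (odd k \<and> y < x) then t * q ^ k else 1)"

fun wt :: "'a::comm_ring_1 \<Rightarrow> 'a \<Rightarrow> nat \<Rightarrow> nat list \<Rightarrow> 'a" where
  "wt t q k (x # y # r) = stp t q k x y * wt t q (Suc k) (y # r)"
| "wt t q k _ = 1"

lemma wt_append: "wt t q k (xs @ y # ys) = wt t q k (xs @ [y]) * wt t q (k + length xs) (y # ys)"
proof (induction xs arbitrary: k)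
  case Nil then show ?case by simp
next
  case (Cons a xs)
  then show ?case by (cases xs) (auto simp: mult.assoc)
qed

lemma wt_Cons_gen: "wt t q k (x # ys) = (case ys of [] \<Rightarrow> 1 | y # _ \<Rightarrow> stp t q k x y) * wt t q (Suc k) ys"
  by (cases ys) auto

lemma wt_snoc_gen: "wt t q k (xs @ [x]) = wt t q k xs * (if xs = [] then 1 else stp t q (k + length xs - 1) (last xs) x)"
proof (cases xs rule: rev_exhaust)
  case Nil then show ?thesis by simp
next
  case (snoc ys y)
  have "wt t q k (ys @ y # [x]) = wt t q k (ys @ [y]) * wt t q (k + length ys) [y, x]"
    by (rule wt_append)
  then show ?thesis using snoc by simp
qed

lemma wt_shift_even: "even s \<Longrightarrow> wt t q (k + s) xs = wt (t * q ^ s) q k xs"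
  by (induction t q k xs rule: wt.induct) (auto simp: stp_def power_add mult_ac)

lemma wt_shift_odd: "odd s \<Longrightarrow> \<forall>x\<in>set xs. x \<le> c \<Longrightarrow>
   wt t q (k + s) xs = wt (t * q ^ s) q k (map (\<lambda>x. c - x) xs)"
  by (induction t q k xs rule: wt.induct) (auto simp: stp_def power_add mult_ac)

lemma wt_map_mono: "(\<forall>x\<in>set xs. \<forall>y\<in>set xs. x < y \<longrightarrow> f x < f y) \<Longrightarrow>
   wt t q k (map f xs) = wt t q k xs"
proof (induction t q k xs rule: wt.induct)
  case (1 t q k x y r)
  have "(f x < f y) = (x < y)" "(f y < f x) = (y < x)"
    using 1(2) by (metis insert_iff list.simps(15) not_less_iff_gr_or_eq)+
  then show ?case using 1 by (simp add: stp_def)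
qed auto

lemma wt_prod: "wt t q k xs = (\<Prod>j<length xs - 1. stp t q (k + j) (xs ! j) (xs ! Suc j))"
proof (induction t q k xs rule: wt.induct)
  case (1 t q k x y r)
  show ?case using 1 by (simp add: prod.lessThan_Suc_shift del: prod.lessThan_Suc)
qed auto

lemma wt_altD: "t ^ altdes xs * q ^ altmaj xs = wt t q 1 xs"
proof -
  let ?L = "length xs"
  have "t ^ altdes xs * q ^ altmaj xs = (\<Prod>i\<in>altD xs. t * q ^ i)"
    by (simp add: altdes_def altmaj_def prod.distrib power_sum)
  also have "\<dots> = (\<Prod>i\<in>{1..<?L}. if i \<in> altD xs then t * q ^ i else 1)"
    by (subst prod.If_cases) (auto simp: altD_def intro!: prod.cong)
  also have "\<dots> = (\<Prod>i\<in>{1..<?L}. stp t q i (xs ! (i - 1)) (xs ! i))"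
    by (intro prod.cong) (auto simp: altD_def stp_def)
  also have "\<dots> = (\<Prod>j\<in>{0..<?L - 1}. stp t q (1 + j) (xs ! j) (xs ! Suc j))"
  proof (cases "?L")
    case 0 then show ?thesis by simp
  next
    case (Suc m)
    then show ?thesis
      using prod.shift_bounds_nat_ivl[of "\<lambda>i. stp t q i (xs ! (i - 1)) (xs ! i)" 0 1 m]
      by (simp add: add.commute)
  qed
  also have "\<dots> = wt t q 1 xs" by (simp add: wt_prod atLeast0LessThan)
  finally show ?thesis .
qed

lemma bij_map_perms: "bij_betw f A B \<Longrightarrow> bij_betw (map f) (permutations_of_set A) (permutations_of_set B)"
proof -
  assume b: "bij_betw f A B"
  show ?thesis unfolding bij_betw_def
  proof
    show "inj_on (map f) (permutations_of_set A)"
      using b by (auto simp: inj_on_def permutations_of_set_def bij_betw_def dest: inj_on_map_eq_map[THEN iffD1, rotated])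
    show "map f ` permutations_of_set A = permutations_of_set B"
    proof
      show "map f ` permutations_of_set A \<subseteq> permutations_of_set B"
        using b by (auto simp: permutations_of_set_def bij_betw_def distinct_map)
      show "permutations_of_set B \<subseteq> map f ` permutations_of_set A"
      proof
        fix ys assume ys: "ys \<in> permutations_of_set B"
        let ?g = "inv_into A f"
        have bi: "bij_betw ?g B A" using b by (rule bij_betw_inv_into)
        have "map f (map ?g ys) = ys"
        proof -
          have "\<forall>y\<in>set ys. f (?g y) = y"
            using ys b by (auto simp: permutations_of_set_def bij_betw_def intro: f_inv_into_f)
          then show ?thesis by (simp add: map_idI)
        qed
        moreover have "map ?g ys \<in> permutations_of_set A"
          using ys bi by (auto simp: permutations_of_set_def bij_betw_def distinct_map)
        ultimately show "ys \<in> map f ` permutations_of_set A" by (metis image_eqI)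
      qed
    qed
  qed
qed

lemma std_sum:
  assumes "finite B"
  shows "(\<Sum>\<tau>\<in>permutations_of_set B. wt t q k \<tau>) = (\<Sum>\<tau>\<in>permutations_of_set {1..card B}. wt t q k \<tau>)"
proof -
  let ?L = "sorted_list_of_set B"
  let ?m = "card B"
  define f where "f = (\<lambda>j. ?L ! (j - 1))"
  have b1: "bij_betw (\<lambda>j. j - 1) {1..?m} {..<?m}"
    by (rule bij_betw_byWitness[where f' = Suc]) auto
  have b2: "bij_betw ((!) ?L) {..<?m} B"
    using assms by (intro bij_betw_nth) auto
  have bf: "bij_betw f {1..?m} B"
    using bij_betw_trans[OF b1 b2] by (simp add: f_def comp_def)
  have mono: "f x < f y" if "x \<in> {1..?m}" "y \<in> {1..?m}" "x < y" for x y
  proof -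
    have "sorted_wrt (<) ?L" using assms by (simp add: strict_sorted_list_of_set)
    moreover have "x - 1 < y - 1" "y - 1 < length ?L" using that assms by auto
    ultimately show ?thesis unfolding f_def by (rule sorted_wrt_nth_less)
  qed
  have "(\<Sum>\<tau>\<in>permutations_of_set B. wt t q k \<tau>) = (\<Sum>\<tau>\<in>permutations_of_set {1..?m}. wt t q k (map f \<tau>))"
    using sum.reindex_bij_betw[OF bij_map_perms[OF bf], of "wt t q k"] by simp
  also have "\<dots> = (\<Sum>\<tau>\<in>permutations_of_set {1..?m}. wt t q k \<tau>)"
    by (intro sum.cong refl wt_map_mono) (auto simp: permutations_of_set_def intro: mono)
  finally show ?thesis .
qed

lemma compl_sum:
  "(\<Sum>\<tau>\<in>permutations_of_set {1..m}. wt t q (k + s) \<tau>) = (\<Sum>\<tau>\<in>permutations_of_set {1..m}. wt (t * q ^ s) q k \<tau>)"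
proof (cases "even s")
  case True then show ?thesis by (simp add: wt_shift_even)
next
  case False
  let ?c = "\<lambda>x. Suc m - x"
  have bc: "bij_betw ?c {1..m} {1..m}"
    by (rule bij_betw_byWitness[where f' = ?c]) auto
  have "(\<Sum>\<tau>\<in>permutations_of_set {1..m}. wt t q (k + s) \<tau>)
      = (\<Sum>\<tau>\<in>permutations_of_set {1..m}. wt (t * q ^ s) q k (map ?c \<tau>))"
    using False by (intro sum.cong refl wt_shift_odd) (auto simp: permutations_of_set_def)
  also have "\<dots> = (\<Sum>\<tau>\<in>permutations_of_set {1..m}. wt (t * q ^ s) q k \<tau>)"
    using sum.reindex_bij_betw[OF bij_map_perms[OF bc], of "wt (t * q ^ s) q k"] by simp
  finally show ?thesis .
qed

lemma sum_wt_Ahat: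
  assumes "finite B"
  shows "(\<Sum>\<tau>\<in>permutations_of_set B. wt t q (1 + s) \<tau>) = Ahat (card B) (t * q ^ s) q"
  using std_sum[OF assms, of t q "1 + s"] compl_sum[where m="card B" and t=t and q=q and k=1 and s=s]
  by (simp add: Ahat_def wt_altD)

lemma decomp:
  assumes "finite S" "m \<notin> S"
  shows "(\<Sum>\<pi>\<in>permutations_of_set (insert m S). g \<pi>) =
         (\<Sum>A\<in>Pow S. \<Sum>\<sigma>\<in>permutations_of_set A. \<Sum>\<tau>\<in>permutations_of_set (S - A). g (\<sigma> @ m # \<tau>))"
proof -
  let ?T = "Sigma (Pow S) (\<lambda>A. permutations_of_set A \<times> permutations_of_set (S - A))"
  let ?h = "\<lambda>(A, \<sigma>, \<tau>). \<sigma> @ m # \<tau>"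
  have fin: "finite (Pow S)" using assms by simp
  have "(\<Sum>A\<in>Pow S. \<Sum>\<sigma>\<in>permutations_of_set A. \<Sum>\<tau>\<in>permutations_of_set (S - A). g (\<sigma> @ m # \<tau>))
      = (\<Sum>A\<in>Pow S. \<Sum>p\<in>permutations_of_set A \<times> permutations_of_set (S - A). g (fst p @ m # snd p))"
    by (simp add: sum.cartesian_product case_prod_beta)
  also have "\<dots> = (\<Sum>x\<in>?T. g (?h x))"
    using fin by (subst sum.Sigma) (auto simp: case_prod_beta)
  also have "\<dots> = (\<Sum>\<pi>\<in>?h ` ?T. g \<pi>)"
  proof (rule sum.reindex[symmetric, unfolded comp_def])
    show "inj_on ?h ?T"
    proof (rule inj_onI)
      fix x y assume x: "x \<in> ?T" and y: "y \<in> ?T" and e: "?h x = ?h y"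
      obtain A \<sigma> \<tau> where xe: "x = (A, \<sigma>, \<tau>)" by (cases x) auto
      obtain B \<sigma>' \<tau>' where ye: "y = (B, \<sigma>', \<tau>')" by (cases y) auto
      have "m \<notin> set \<sigma>" "m \<notin> set \<tau>" "set \<sigma> = A" "set \<sigma>' = B"
        using x y assms unfolding xe ye by (auto simp: permutations_of_set_def)
      moreover have "\<sigma> @ m # \<tau> = \<sigma>' @ m # \<tau>'" using e unfolding xe ye by simp
      ultimately have "\<sigma> = \<sigma>' \<and> \<tau> = \<tau>'" using append_Cons_eq_iff by metis
      then show "x = y" unfolding xe ye using \<open>set \<sigma> = A\<close> \<open>set \<sigma>' = B\<close> by simp
    qed
  qed
  also have "?h ` ?T = permutations_of_set (insert m S)"
  proof
    show "?h ` ?T \<subseteq> permutations_of_set (insert m S)"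
    proof
      fix \<pi> assume "\<pi> \<in> ?h ` ?T"
      then obtain A \<sigma> \<tau> where pe: "\<pi> = \<sigma> @ m # \<tau>" and A: "A \<subseteq> S"
        and s: "\<sigma> \<in> permutations_of_set A" and t: "\<tau> \<in> permutations_of_set (S - A)" by auto
      have s1: "set \<sigma> = A" "distinct \<sigma>" using s by (auto simp: permutations_of_set_def)
      have t1: "set \<tau> = S - A" "distinct \<tau>" using t by (auto simp: permutations_of_set_def)
      have "set \<pi> = insert m S" unfolding pe using s1 t1 A by auto
      moreover have "distinct \<pi>" unfolding pe using s1 t1 A assms(2) by auto
      ultimately show "\<pi> \<in> permutations_of_set (insert m S)" by (simp add: permutations_of_set_def)
    qed
    show "permutations_of_set (insert m S) \<subseteq> ?h ` ?T"
    proof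
      fix \<pi> assume p: "\<pi> \<in> permutations_of_set (insert m S)"
      then have sp: "set \<pi> = insert m S" and dp: "distinct \<pi>" by (auto simp: permutations_of_set_def)
      then have "m \<in> set \<pi>" by auto
      then obtain \<sigma> \<tau> where pe: "\<pi> = \<sigma> @ m # \<tau>" by (auto simp: in_set_conv_decomp)
      have d: "distinct \<sigma>" "distinct \<tau>" "m \<notin> set \<sigma>" "m \<notin> set \<tau>" "set \<sigma> \<inter> set \<tau> = {}"
        using dp unfolding pe by auto
      have u: "insert m (set \<sigma> \<union> set \<tau>) = insert m S" using sp unfolding pe by simp
      have A: "set \<sigma> \<subseteq> S" using u d(3) by (metis Un_iff insert_iff subsetI)
      have B: "set \<tau> = S - set \<sigma>" using u d(3,4,5) assms(2) by (auto simp: set_eq_iff)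
      have "(set \<sigma>, \<sigma>, \<tau>) \<in> ?T"
        using A B d by (simp add: permutations_of_set_def)
      moreover have "\<pi> = ?h (set \<sigma>, \<sigma>, \<tau>)" using pe by simp
      ultimately show "\<pi> \<in> ?h ` ?T" by (rule rev_image_eqI)
    qed
  qed
  finally show ?thesis by simp
qed

lemma group_card:
  assumes "finite S"
  shows "(\<Sum>A\<in>Pow S. F (card A)) = (\<Sum>i=0..card S. of_nat (card S choose i) * (F i :: 'a::comm_ring_1))"
proof -
  have "(\<Sum>A\<in>Pow S. F (card A)) = (\<Sum>i\<in>card ` Pow S. \<Sum>A\<in>{A\<in>Pow S. card A = i}. F (card A))"
    by (rule sum.image_gen) (use assms in simp)
  also have "card ` Pow S = {0..card S}"
  proof
    show "card ` Pow S \<subseteq> {0..card S}"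
    proof
      fix i assume "i \<in> card ` Pow S"
      then obtain B where "B \<subseteq> S" "i = card B" by blast
      then show "i \<in> {0..card S}" using card_mono[OF assms] by simp
    qed
    show "{0..card S} \<subseteq> card ` Pow S"
    proof
      fix i assume "i \<in> {0..card S}"
      then have "i \<le> card S" by simp
      then obtain B where "B \<subseteq> S" "card B = i" using obtain_subset_with_card_n by metis
      then show "i \<in> card ` Pow S" by auto
    qed
  qed
  also have "(\<Sum>i=0..card S. \<Sum>A\<in>{A\<in>Pow S. card A = i}. F (card A)) = (\<Sum>i=0..card S. of_nat (card S choose i) * F i)"
  proof (intro sum.cong refl)
    fix i
    have "(\<Sum>A\<in>{A\<in>Pow S. card A = i}. F (card A)) = (\<Sum>A\<in>{A. A \<subseteq> S \<and> card A = i}. F i)"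
      by (rule sum.cong) auto
    also have "\<dots> = of_nat (card S choose i) * F i"
      using assms by (simp add: n_subsets)
    finally show "(\<Sum>A\<in>{A\<in>Pow S. card A = i}. F (card A)) = of_nat (card S choose i) * F i" .
  qed
  finally show ?thesis .
qed
lemma wt_split: "wt t q 1 (\<sigma> @ m # \<tau>) = wt t q 1 \<sigma> * (if \<sigma> = [] then 1 else stp t q (length \<sigma>) (last \<sigma>) m)
   * (case \<tau> of [] \<Rightarrow> 1 | y # _ \<Rightarrow> stp t q (Suc (length \<sigma>)) m y) * wt t q (1 + Suc (length \<sigma>)) \<tau>"
proof -
  have "wt t q 1 (\<sigma> @ m # \<tau>) = wt t q 1 (\<sigma> @ [m]) * wt t q (1 + length \<sigma>) (m # \<tau>)"
    by (rule wt_append)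
  also have "wt t q 1 (\<sigma> @ [m]) = wt t q 1 \<sigma> * (if \<sigma> = [] then 1 else stp t q (length \<sigma>) (last \<sigma>) m)"
    by (simp add: wt_snoc_gen)
  also have "wt t q (1 + length \<sigma>) (m # \<tau>) = (case \<tau> of [] \<Rightarrow> 1 | y # _ \<Rightarrow> stp t q (Suc (length \<sigma>)) m y) * wt t q (1 + Suc (length \<sigma>)) \<tau>"
    by (cases \<tau>) auto
  finally show ?thesis by (simp only: mult.assoc)
qed

lemma pw_max:
  assumes "set \<sigma> \<union> set \<tau> \<subseteq> {..<m}"
  shows "wt t q 1 (\<sigma> @ m # \<tau>) = wt t q 1 \<sigma> * ((if \<sigma> \<noteq> [] \<and> even (length \<sigma>) then t * q ^ length \<sigma> else 1)
     * (if \<tau> \<noteq> [] \<and> even (length \<sigma>) then t * q ^ Suc (length \<sigma>) else 1)) * wt t q (1 + Suc (length \<sigma>)) \<tau>"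
proof -
  have a: "(if \<sigma> = [] then 1 else stp t q (length \<sigma>) (last \<sigma>) m) = (if \<sigma> \<noteq> [] \<and> even (length \<sigma>) then t * q ^ length \<sigma> else 1)"
  proof (cases "\<sigma> = []")
    case False
    then have "last \<sigma> < m" using assms last_in_set by blast
    then show ?thesis using False by (auto simp: stp_def)
  qed simp
  have b: "(case \<tau> of [] \<Rightarrow> 1 | y # _ \<Rightarrow> stp t q (Suc (length \<sigma>)) m y) = (if \<tau> \<noteq> [] \<and> even (length \<sigma>) then t * q ^ Suc (length \<sigma>) else 1)"
  proof (cases \<tau>)
    case (Cons y r)
    then have "y < m" using assms by auto
    then show ?thesis using Cons by (auto simp: stp_def)
  qed simp
  show ?thesis unfolding wt_split a b by (simp only: mult.assoc)
qed

lemma pw_min: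
  assumes "set \<sigma> \<union> set \<tau> \<subseteq> {m<..}"
  shows "wt t q 1 (\<sigma> @ m # \<tau>) = wt t q 1 \<sigma> * ((if \<sigma> \<noteq> [] \<and> odd (length \<sigma>) then t * q ^ length \<sigma> else 1)
     * (if \<tau> \<noteq> [] \<and> odd (length \<sigma>) then t * q ^ Suc (length \<sigma>) else 1)) * wt t q (1 + Suc (length \<sigma>)) \<tau>"
proof -
  have a: "(if \<sigma> = [] then 1 else stp t q (length \<sigma>) (last \<sigma>) m) = (if \<sigma> \<noteq> [] \<and> odd (length \<sigma>) then t * q ^ length \<sigma> else 1)"
  proof (cases "\<sigma> = []")
    case False
    then have "m < last \<sigma>" using assms last_in_set by fastforce
    then show ?thesis using False by (auto simp: stp_def)
  qed simp
  have b: "(case \<tau> of [] \<Rightarrow> 1 | y # _ \<Rightarrow> stp t q (Suc (length \<sigma>)) m y) = (if \<tau> \<noteq> [] \<and> odd (length \<sigma>) then t * q ^ Suc (length \<sigma>) else 1)"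
  proof (cases \<tau>)
    case (Cons y r)
    then have "m < y" using assms by auto
    then show ?thesis using Cons by (auto simp: stp_def)
  qed simp
  show ?thesis unfolding wt_split a b by (simp only: mult.assoc)
qed

lemma Ahat_wt: "Ahat n t q = (\<Sum>\<pi>\<in>permutations_of_set {1..n}. wt t q 1 \<pi>)"
  by (simp add: Ahat_def wt_altD)

lemma gen_decomp:
  fixes t q :: "'a::comm_ring_1"
  assumes fin: "finite S" and mS: "m \<notin> S" and cS: "card S = n"
    and pw: "\<And>A \<sigma> \<tau>. A \<subseteq> S \<Longrightarrow> \<sigma> \<in> permutations_of_set A \<Longrightarrow> \<tau> \<in> permutations_of_set (S - A) \<Longrightarrow>
        wt t q 1 (\<sigma> @ m # \<tau>) = wt t q 1 \<sigma> * E (length \<sigma>) * wt t q (1 + Suc (length \<sigma>)) \<tau>"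
  shows "(\<Sum>\<pi>\<in>permutations_of_set (insert m S). wt t q 1 \<pi>)
     = (\<Sum>i=0..n. of_nat (n choose i) * (Ahat i t q * E i * Ahat (n - i) (t * q ^ Suc i) q))"
proof -
  have "(\<Sum>\<pi>\<in>permutations_of_set (insert m S). wt t q 1 \<pi>)
     = (\<Sum>A\<in>Pow S. \<Sum>\<sigma>\<in>permutations_of_set A. \<Sum>\<tau>\<in>permutations_of_set (S - A). wt t q 1 (\<sigma> @ m # \<tau>))"
    by (rule decomp[OF fin mS])
  also have "\<dots> = (\<Sum>A\<in>Pow S. Ahat (card A) t q * E (card A) * Ahat (n - card A) (t * q ^ Suc (card A)) q)"
  proof (intro sum.cong refl)
    fix A assume A: "A \<in> Pow S"
    then have fA: "finite A" "finite (S - A)" using fin finite_subset by auto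
    have cSA: "card (S - A) = n - card A" using A fin cS by (simp add: card_Diff_subset finite_subset)
    have "(\<Sum>\<sigma>\<in>permutations_of_set A. \<Sum>\<tau>\<in>permutations_of_set (S - A). wt t q 1 (\<sigma> @ m # \<tau>))
       = (\<Sum>\<sigma>\<in>permutations_of_set A. \<Sum>\<tau>\<in>permutations_of_set (S - A). (wt t q 1 \<sigma> * E (card A)) * wt t q (1 + Suc (card A)) \<tau>)"
    proof (intro sum.cong refl)
      fix \<sigma> \<tau> assume s: "\<sigma> \<in> permutations_of_set A" and "\<tau> \<in> permutations_of_set (S - A)"
      then have "wt t q 1 (\<sigma> @ m # \<tau>) = wt t q 1 \<sigma> * E (length \<sigma>) * wt t q (1 + Suc (length \<sigma>)) \<tau>"
        using pw A by auto
      moreover have "length \<sigma> = card A" using s by (auto simp: permutations_of_set_def distinct_card)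
      ultimately show "wt t q 1 (\<sigma> @ m # \<tau>) = (wt t q 1 \<sigma> * E (card A)) * wt t q (1 + Suc (card A)) \<tau>" by simp
    qed
    also have "\<dots> = (\<Sum>\<sigma>\<in>permutations_of_set A. wt t q 1 \<sigma> * E (card A)) * (\<Sum>\<tau>\<in>permutations_of_set (S - A). wt t q (1 + Suc (card A)) \<tau>)"
      by (simp only: sum_product)
    also have "\<dots> = (\<Sum>\<sigma>\<in>permutations_of_set A. wt t q (1 + 0) \<sigma>) * E (card A) * (\<Sum>\<tau>\<in>permutations_of_set (S - A). wt t q (1 + Suc (card A)) \<tau>)"
      by (simp add: sum_distrib_right)
    also have "\<dots> = Ahat (card A) t q * E (card A) * Ahat (n - card A) (t * q ^ Suc (card A)) q"
      by (simp only: sum_wt_Ahat fA cSA) simp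
    finally show "(\<Sum>\<sigma>\<in>permutations_of_set A. \<Sum>\<tau>\<in>permutations_of_set (S - A). wt t q 1 (\<sigma> @ m # \<tau>))
       = Ahat (card A) t q * E (card A) * Ahat (n - card A) (t * q ^ Suc (card A)) q" .
  qed
  also have "\<dots> = (\<Sum>i=0..n. of_nat (n choose i) * (Ahat i t q * E i * Ahat (n - i) (t * q ^ Suc i) q))"
    using group_card[OF fin, of "\<lambda>i. Ahat i t q * E i * Ahat (n - i) (t * q ^ Suc i) q"] cS by simp
  finally show ?thesis .
qed

definition Emax :: "nat \<Rightarrow> 'a::comm_ring_1 \<Rightarrow> 'a \<Rightarrow> nat \<Rightarrow> 'a" where
  "Emax n t q i = (if 0 < i \<and> even i then t * q ^ i else 1) * (if i < n \<and> even i then t * q ^ Suc i else 1)"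
definition Emin :: "nat \<Rightarrow> 'a::comm_ring_1 \<Rightarrow> 'a \<Rightarrow> nat \<Rightarrow> 'a" where
  "Emin n t q i = (if 0 < i \<and> odd i then t * q ^ i else 1) * (if i < n \<and> odd i then t * q ^ Suc i else 1)"

lemma tau_nil:
  assumes "finite S" "A \<subseteq> S" "\<sigma> \<in> permutations_of_set A" "\<tau> \<in> permutations_of_set (S - A)"
  shows "(\<tau> \<noteq> []) = (length \<sigma> < card S)" "(\<sigma> \<noteq> []) = (0 < length \<sigma>)"
proof -
  have l: "length \<sigma> = card A" using assms(3) by (auto simp: permutations_of_set_def distinct_card)
  have st: "set \<tau> = S - A" using assms(4) by (auto simp: permutations_of_set_def)
  have "(\<tau> \<noteq> []) = (set \<tau> \<noteq> {})" by simp
  then have "(\<tau> \<noteq> []) = (S - A \<noteq> {})" using st by simp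
  also have "\<dots> = (card A < card S)"
  proof
    assume "S - A \<noteq> {}"
    then have "A \<subset> S" using assms(2) by blast
    then show "card A < card S" using assms(1) by (rule psubset_card_mono[rotated])
  next
    assume c: "card A < card S"
    show "S - A \<noteq> {}"
    proof
      assume "S - A = {}"
      then have "A = S" using assms(2) by blast
      then show False using c by simp
    qed
  qed
  finally show "(\<tau> \<noteq> []) = (length \<sigma> < card S)" using l by simp
  show "(\<sigma> \<noteq> []) = (0 < length \<sigma>)" by auto
qed

lemma Ahat_max: "Ahat (Suc n) t q = (\<Sum>i=0..n. of_nat (n choose i) * (Ahat i t q * Emax n t q i * Ahat (n - i) (t * q ^ Suc i) q))"
proof -
  have "{1..Suc n} = insert (Suc n) {1..n}" by auto
  then have "Ahat (Suc n) t q = (\<Sum>\<pi>\<in>permutations_of_set (insert (Suc n) {1..n}). wt t q 1 \<pi>)"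
    using Ahat_wt[of "Suc n" t q] by (simp only:)
  also have "\<dots> = (\<Sum>i=0..n. of_nat (n choose i) * (Ahat i t q * Emax n t q i * Ahat (n - i) (t * q ^ Suc i) q))"
  proof (rule gen_decomp)
    fix A \<sigma> \<tau> assume h: "A \<subseteq> {1..n}" "\<sigma> \<in> permutations_of_set A" "\<tau> \<in> permutations_of_set ({1..n} - A)"
    have "set \<sigma> = A" "set \<tau> = {1..n} - A" using h(2,3) by (simp_all add: permutations_of_set_def)
    then have "set \<sigma> \<union> set \<tau> \<subseteq> {..<Suc n}" using h(1) by auto
    note P = pw_max[OF this, of t q]
    have c: "card {1..n} = n" by simp
    note T = tau_nil[OF finite_atLeastAtMost h, unfolded c]
    have E: "(if \<sigma> \<noteq> [] \<and> even (length \<sigma>) then t * q ^ length \<sigma> else 1)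
     * (if \<tau> \<noteq> [] \<and> even (length \<sigma>) then t * q ^ Suc (length \<sigma>) else 1) = Emax n t q (length \<sigma>)"
      unfolding Emax_def T by (rule refl)
    show "wt t q 1 (\<sigma> @ Suc n # \<tau>) = wt t q 1 \<sigma> * Emax n t q (length \<sigma>) * wt t q (1 + Suc (length \<sigma>)) \<tau>"
      using P unfolding E .
  qed auto
  finally show ?thesis .
qed

lemma Ahat_min: "Ahat (Suc n) t q = (\<Sum>i=0..n. of_nat (n choose i) * (Ahat i t q * Emin n t q i * Ahat (n - i) (t * q ^ Suc i) q))"
proof -
  have "{1..Suc n} = insert 1 {2..Suc n}" by auto
  then have "Ahat (Suc n) t q = (\<Sum>\<pi>\<in>permutations_of_set (insert 1 {2..Suc n}). wt t q 1 \<pi>)"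
    using Ahat_wt[of "Suc n" t q] by (simp only:)
  also have "\<dots> = (\<Sum>i=0..n. of_nat (n choose i) * (Ahat i t q * Emin n t q i * Ahat (n - i) (t * q ^ Suc i) q))"
  proof (rule gen_decomp)
    fix A \<sigma> \<tau> assume h: "A \<subseteq> {2..Suc n}" "\<sigma> \<in> permutations_of_set A" "\<tau> \<in> permutations_of_set ({2..Suc n} - A)"
    have "set \<sigma> = A" "set \<tau> = {2..Suc n} - A" using h(2,3) by (simp_all add: permutations_of_set_def)
    then have "set \<sigma> \<union> set \<tau> \<subseteq> {1<..}" using h(1) by auto
    note P = pw_min[OF this, of t q]
    have c: "card {2..Suc n} = n" by simp
    note T = tau_nil[OF finite_atLeastAtMost h, unfolded c]
    have E: "(if \<sigma> \<noteq> [] \<and> odd (length \<sigma>) then t * q ^ length \<sigma> else 1)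
     * (if \<tau> \<noteq> [] \<and> odd (length \<sigma>) then t * q ^ Suc (length \<sigma>) else 1) = Emin n t q (length \<sigma>)"
      unfolding Emin_def T by (rule refl)
    show "wt t q 1 (\<sigma> @ 1 # \<tau>) = wt t q 1 \<sigma> * Emin n t q (length \<sigma>) * wt t q (1 + Suc (length \<sigma>)) \<tau>"
      using P unfolding E .
  qed auto
  finally show ?thesis .
qed

lemma Ahat_0: "Ahat 0 t q = 1"
  by (simp add: Ahat_def altdes_def altmaj_def altD_def)

lemma Ahat_1: "Ahat 1 t q = 1"
  by (simp add: Ahat_def altdes_def altmaj_def altD_def)

theorem theorem2p2:
  fixes t q :: "'a::comm_ring_1" and n :: nat
  assumes "n \<ge> 1"
  shows "2 * Ahat (n + 1) t q =
           (1 + t * q) * Ahat n (t * q) q + (1 + t * q ^ n) * Ahat n t q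
           + (\<Sum>i = 1..n - 1. (1 + t ^ 2 * q ^ (2 * i + 1)) * of_nat (n choose i)
                 * Ahat i t q * Ahat (n - i) (t * q ^ (i + 1)) q)
         \<and> Ahat 1 t q = 1"
proof
  show "Ahat 1 t q = 1" by (rule Ahat_1)
  obtain k where n: "n = Suc k" using assms by (cases n) auto
  define f where "f i = of_nat (n choose i) * (Ahat i t q * (Emax n t q i + Emin n t q i) * Ahat (n - i) (t * q ^ Suc i) q)" for i
  have "2 * Ahat (n + 1) t q = Ahat (Suc n) t q + Ahat (Suc n) t q" by simp
  also have "\<dots> = (\<Sum>i=0..n. f i)"
    unfolding f_def by (subst Ahat_max, subst Ahat_min) (simp add: sum.distrib[symmetric] algebra_simps)
  also have "\<dots> = f 0 + (\<Sum>i=1..k. f i) + f n"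
    unfolding n by (subst sum.atLeast_Suc_atMost) (simp_all add: add.assoc)
  also have "f 0 = (1 + t * q) * Ahat n (t * q) q"
    using n by (simp add: f_def Emax_def Emin_def Ahat_0 add.commute)
  also have "f n = (1 + t * q ^ n) * Ahat n t q"
    using n by (simp add: f_def Emax_def Emin_def Ahat_0 algebra_simps)
  also have "(\<Sum>i=1..k. f i) = (\<Sum>i = 1..n - 1. (1 + t ^ 2 * q ^ (2 * i + 1)) * of_nat (n choose i)
                 * Ahat i t q * Ahat (n - i) (t * q ^ (i + 1)) q)"
  proof (intro sum.cong)
    fix i assume i: "i \<in> {1..n - 1}"
    then have "0 < i" "i < n" using n by auto
    have qq: "q ^ (2 * i + 1) = q ^ i * q ^ i * q" by (simp add: mult_2 power_add)
    have "Emax n t q i + Emin n t q i = 1 + t ^ 2 * q ^ (2 * i + 1)"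
      using \<open>0 < i\<close> \<open>i < n\<close> unfolding qq by (auto simp: Emax_def Emin_def power2_eq_square algebra_simps)
    then show "f i = (1 + t ^ 2 * q ^ (2 * i + 1)) * of_nat (n choose i) * Ahat i t q * Ahat (n - i) (t * q ^ (i + 1)) q"
      by (simp add: f_def mult_ac)
  qed (simp add: n)
  finally show "2 * Ahat (n + 1) t q =
           (1 + t * q) * Ahat n (t * q) q + (1 + t * q ^ n) * Ahat n t q
           + (\<Sum>i = 1..n - 1. (1 + t ^ 2 * q ^ (2 * i + 1)) * of_nat (n choose i)
                 * Ahat i t q * Ahat (n - i) (t * q ^ (i + 1)) q)" by (simp add: algebra_simps)
qed

end
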